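(* Fix parameters and a population size vector $\mathbf m$ as in the context, with Assumption (A), and suppose $c_P\ge\Delta L\cdot\tau_{DA}$. Then for any $K\in\mathbb N$ and $\beta_{IA}\in(0,1]$, any Nash equilibrium $\mathbf x^\star$ of the population game with parameters $(K,\beta_{IA})$, and the minimizer $\mathbf y^\star$ of $\overline{SC}$ over $\mathcal Y$ (for the same $K,\beta_{IA}$), $$\frac{SC(\mathbf x^\star)}{\overline{SC}(\mathbf y^\star)}\le 1+d_{\rm avg}\cdot e_{\max}(\mathbf m,K,\beta_{IA}),\qquad e_{\max}(\mathbf m,K,\beta_{IA})=\beta_{IA}\,p_U^i\sum_{k=0}^{K-1}\Big(\frac{\beta_{IA}\,p_U^i}{d_{\rm avg}}\sum_{d\in\mathcal D}d(d-1)m_d\Big)^k.$$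
   Context: Let $D_{\max}\in\mathbb N$, $\mathcal D=\{1,\dots,D_{\max}\}$, $\mathcal A=\{I,N,P\}$. A population size vector is $\mathbf m=(m_d)_{d\in\mathcal D}$ with $m_d>0$, $\sum_d m_d=1$; $d_{\rm avg}=\sum_d d\,m_d$. A social state is $\mathbf x=(x_{d,a})$ with $x_{d,a}\ge0$, $\sum_a x_{d,a}=m_d$. Parameters: $\tau_{DA}\in(0,1]$; $0\le L_P<L_U$, $\Delta L=L_U-L_P$; $0\le p_P^i<p_U^i\le1$; $\beta_{IA}\in(0,1]$; $K\in\mathbb N$; $c_P,c_I\ge0$; $\xi_{\rm cov}\in(0,1]$, $ded\ge0$, $Cov_{\max}\ge0$. Define $w_d=d\,m_d/\sum_{d'}d'm_{d'}$, $g_{d,a}=x_{d,a}/m_d$, $g_{d,U}=g_{d,N}+g_{d,I}$, $\gamma(\mathbf x)=\beta_{IA}\sum_d w_d(g_{d,P}p_P^i+g_{d,U}p_U^i)$, $\lambda(\mathbf x)=\beta_{IA}\sum_d w_d(d-1)(g_{d,P}p_P^i+g_{d,U}p_U^i)$, $e(\mathbf x)=\gamma(\mathbf x)\sum_{k=1}^K\lambda(\mathbf x)^{k-1}$. Costs: $C_{d,P}(\mathbf x)=\tau_{DA}(1+d\,e(\mathbf x))L_P+c_P$, $C_{d,N}(\mathbf x)=\tau_{DA}(1+d\,e(\mathbf x))L_U$, $C_{d,I}(\mathbf x)=C_{d,N}(\mathbf x)+c_I-\min\big(Cov_{\max},\xi_{\rm cov}\max(0,C_{d,N}(\mathbf x)-ded)\big)$.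 A Nash equilibrium is a social state $\mathbf x^\star$ such that $x^\star_{d,a}>0$ implies $C_{d,a}(\mathbf x^\star)=\min_{a'\in\mathcal A}C_{d,a'}(\mathbf x^\star)$. Social cost of a social state: $SC(\mathbf x)=\sum_d\big(x_{d,P}C_{d,P}(\mathbf x)+(m_d-x_{d,P})C_{d,N}(\mathbf x)\big)$. Let $\mathcal Y=\prod_d[0,m_d]$, $\mathbf X(\mathbf y)$ the social state with $X_{d,P}=y_d$, $X_{d,N}=m_d-y_d$, $X_{d,I}=0$, and $\overline{SC}(\mathbf y)=SC(\mathbf X(\mathbf y))$; this has a unique minimizer $\mathbf y^\star$ over $\mathcal Y$. Assumption (A): $L_P<(1-\xi_{\rm cov})L_U$ and $c_P>c_I+ded$. *)

theory Defs
  imports Complex_Main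
begin

datatype act = I | N | P

record params =
  tau :: real
  LP :: real
  LU :: real
  pP :: real
  pU :: real
  beta :: real
  Kh :: nat
  cP :: real
  cI :: real
  xi :: real
  ded :: real
  Covmax :: real

definition Dset :: "nat \<Rightarrow> nat set" where
  "Dset Dmax = {1..Dmax}"

definition pop_vector :: "nat \<Rightarrow> (nat \<Rightarrow> real) \<Rightarrow> bool" where
  "pop_vector Dmax m \<longleftrightarrow> (\<forall>d\<in>Dset Dmax. m d > 0) \<and> (\<Sum>d\<in>Dset Dmax. m d) = 1"

definition davg :: "nat \<Rightarrow> (nat \<Rightarrow> real) \<Rightarrow> real" where
  "davg Dmax m = (\<Sum>d\<in>Dset Dmax. real d * m d)"

definition social_state :: "nat \<Rightarrow> (nat \<Rightarrow> real) \<Rightarrow> (nat \<Rightarrow> act \<Rightarrow> real) \<Rightarrow> bool" where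
  "social_state Dmax m x \<longleftrightarrow>
     (\<forall>d\<in>Dset Dmax. (\<forall>a. x d a \<ge> 0) \<and> x d I + x d N + x d P = m d)"

definition wgt :: "nat \<Rightarrow> (nat \<Rightarrow> real) \<Rightarrow> nat \<Rightarrow> real" where
  "wgt Dmax m d = real d * m d / (\<Sum>d'\<in>Dset Dmax. real d' * m d')"

definition gfrac :: "(nat \<Rightarrow> real) \<Rightarrow> (nat \<Rightarrow> act \<Rightarrow> real) \<Rightarrow> nat \<Rightarrow> act \<Rightarrow> real" where
  "gfrac m x d a = x d a / m d"

definition gU :: "(nat \<Rightarrow> real) \<Rightarrow> (nat \<Rightarrow> act \<Rightarrow> real) \<Rightarrow> nat \<Rightarrow> real" where
  "gU m x d = gfrac m x d N + gfrac m x d I"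

definition gam :: "params \<Rightarrow> nat \<Rightarrow> (nat \<Rightarrow> real) \<Rightarrow> (nat \<Rightarrow> act \<Rightarrow> real) \<Rightarrow> real" where
  "gam p Dmax m x = beta p * (\<Sum>d\<in>Dset Dmax.
      wgt Dmax m d * (gfrac m x d P * pP p + gU m x d * pU p))"

definition lam :: "params \<Rightarrow> nat \<Rightarrow> (nat \<Rightarrow> real) \<Rightarrow> (nat \<Rightarrow> act \<Rightarrow> real) \<Rightarrow> real" where
  "lam p Dmax m x = beta p * (\<Sum>d\<in>Dset Dmax.
      wgt Dmax m d * (real d - 1) * (gfrac m x d P * pP p + gU m x d * pU p))"

definition ext :: "params \<Rightarrow> nat \<Rightarrow> (nat \<Rightarrow> real) \<Rightarrow> (nat \<Rightarrow> act \<Rightarrow> real) \<Rightarrow> real" where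
  "ext p Dmax m x = gam p Dmax m x * (\<Sum>k\<in>{1..Kh p}. lam p Dmax m x ^ (k - 1))"

definition cost :: "params \<Rightarrow> nat \<Rightarrow> (nat \<Rightarrow> real) \<Rightarrow> (nat \<Rightarrow> act \<Rightarrow> real) \<Rightarrow> nat \<Rightarrow> act \<Rightarrow> real" where
  "cost p Dmax m x d a =
     (let CN = tau p * (1 + real d * ext p Dmax m x) * LU p in
      case a of
        P \<Rightarrow> tau p * (1 + real d * ext p Dmax m x) * LP p + cP p
      | N \<Rightarrow> CN
      | I \<Rightarrow> CN + cI p - min (Covmax p) (xi p * max 0 (CN - ded p)))"

definition nash_eq :: "params \<Rightarrow> nat \<Rightarrow> (nat \<Rightarrow> real) \<Rightarrow> (nat \<Rightarrow> act \<Rightarrow> real) \<Rightarrow> bool" where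
  "nash_eq p Dmax m x \<longleftrightarrow> social_state Dmax m x \<and>
     (\<forall>d\<in>Dset Dmax. \<forall>a. x d a > 0 \<longrightarrow>
        cost p Dmax m x d a = (MIN a'\<in>(UNIV::act set). cost p Dmax m x d a'))"

definition SC :: "params \<Rightarrow> nat \<Rightarrow> (nat \<Rightarrow> real) \<Rightarrow> (nat \<Rightarrow> act \<Rightarrow> real) \<Rightarrow> real" where
  "SC p Dmax m x = (\<Sum>d\<in>Dset Dmax.
      x d P * cost p Dmax m x d P + (m d - x d P) * cost p Dmax m x d N)"

definition Yset :: "nat \<Rightarrow> (nat \<Rightarrow> real) \<Rightarrow> (nat \<Rightarrow> real) set" where
  "Yset Dmax m = {y. \<forall>d\<in>Dset Dmax. 0 \<le> y d \<and> y d \<le> m d}"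

definition Xof :: "(nat \<Rightarrow> real) \<Rightarrow> (nat \<Rightarrow> real) \<Rightarrow> nat \<Rightarrow> act \<Rightarrow> real" where
  "Xof m y d a = (case a of P \<Rightarrow> y d | N \<Rightarrow> m d - y d | I \<Rightarrow> 0)"

definition SCbar :: "params \<Rightarrow> nat \<Rightarrow> (nat \<Rightarrow> real) \<Rightarrow> (nat \<Rightarrow> real) \<Rightarrow> real" where
  "SCbar p Dmax m y = SC p Dmax m (Xof m y)"

definition emax :: "params \<Rightarrow> nat \<Rightarrow> (nat \<Rightarrow> real) \<Rightarrow> real" where
  "emax p Dmax m = beta p * pU p * (\<Sum>k<Kh p.
      (beta p * pU p / davg Dmax m * (\<Sum>d\<in>Dset Dmax. real d * (real d - 1) * m d)) ^ k)"

definition valid_params :: "params \<Rightarrow> bool" where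
  "valid_params p \<longleftrightarrow>
     0 < tau p \<and> tau p \<le> 1 \<and>
     0 \<le> LP p \<and> LP p < LU p \<and>
     0 \<le> pP p \<and> pP p < pU p \<and> pU p \<le> 1 \<and>
     0 < beta p \<and> beta p \<le> 1 \<and>
     Kh p \<ge> 1 \<and>
     0 \<le> cP p \<and> 0 \<le> cI p \<and>
     0 < xi p \<and> xi p \<le> 1 \<and> 0 \<le> ded p \<and> 0 \<le> Covmax p"

definition assumption_A :: "params \<Rightarrow> bool" where
  "assumption_A p \<longleftrightarrow> LP p < (1 - xi p) * LU p \<and> cP p > cI p + ded p"

end

theory Submission
  imports Defs
begin

lemma UNIV_act: "(UNIV::act set) = {I,N,P}"
  using act.exhaust by auto

lemma costP: "cost p Dmax m x d P = tau p * (1 + real d * ext p Dmax m x) * LP p + cP p"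
  by (simp add: cost_def Let_def)
lemma costN: "cost p Dmax m x d N = tau p * (1 + real d * ext p Dmax m x) * LU p"
  by (simp add: cost_def Let_def)

lemma davg_pos:
  assumes "Dmax \<ge> 1" "pop_vector Dmax m"
  shows "davg Dmax m > 0"
proof -
  have "1 \<in> Dset Dmax" using assms(1) by (simp add: Dset_def)
  moreover have "\<forall>d\<in>Dset Dmax. real d * m d \<ge> 0" using assms(2) by (auto simp: pop_vector_def less_imp_le)
  moreover have "real 1 * m 1 > 0" using assms(2) \<open>1 \<in> Dset Dmax\<close> by (auto simp: pop_vector_def)
  ultimately have "(\<Sum>d\<in>Dset Dmax. real d * m d) > 0"
    by (intro sum_pos2[of _ 1]) (auto simp: Dset_def)
  thus ?thesis by (simp add: davg_def)
qed

lemma ext_bounds: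
  assumes "Dmax \<ge> 1" "pop_vector Dmax m" "valid_params p"
    and g: "\<forall>d\<in>Dset Dmax. gfrac m x d P \<ge> 0 \<and> gU m x d \<ge> 0 \<and> gfrac m x d P + gU m x d = 1"
  shows "0 \<le> ext p Dmax m x \<and> ext p Dmax m x \<le> emax p Dmax m"
proof -
  define S where "S = (\<Sum>d\<in>Dset Dmax. real d * m d)"
  have Spos: "S > 0" using davg_pos[OF assms(1,2)] by (simp add: S_def davg_def)
  have vp: "0 \<le> pP p" "pP p < pU p" "pU p \<le> 1" "0 < beta p"
    using assms(3) by (auto simp: valid_params_def)
  have mpos: "\<forall>d\<in>Dset Dmax. m d > 0" using assms(2) by (simp add: pop_vector_def)
  have d1: "\<forall>d\<in>Dset Dmax. d \<ge> 1" by (simp add: Dset_def)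
  have w0: "\<forall>d\<in>Dset Dmax. wgt Dmax m d \<ge> 0"
    using mpos Spos by (auto simp: wgt_def S_def[symmetric] less_imp_le)
  have t0: "\<forall>d\<in>Dset Dmax. 0 \<le> gfrac m x d P * pP p + gU m x d * pU p"
    using g vp by auto
  have t1: "\<forall>d\<in>Dset Dmax. gfrac m x d P * pP p + gU m x d * pU p \<le> pU p"
  proof
    fix d assume d: "d \<in> Dset Dmax"
    have "gfrac m x d P * pP p \<le> gfrac m x d P * pU p"
      using g d vp by (intro mult_left_mono) auto
    hence "gfrac m x d P * pP p + gU m x d * pU p \<le> (gfrac m x d P + gU m x d) * pU p"
      by (simp add: algebra_simps)
    thus "gfrac m x d P * pP p + gU m x d * pU p \<le> pU p" using g d by simp
  qed
  have sw: "(\<Sum>d\<in>Dset Dmax. wgt Dmax m d) = 1"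
    using Spos by (simp add: wgt_def S_def[symmetric] sum_divide_distrib[symmetric])
  have gam0: "0 \<le> gam p Dmax m x"
    unfolding gam_def using vp w0 t0 by (intro mult_nonneg_nonneg sum_nonneg) auto
  have "(\<Sum>d\<in>Dset Dmax. wgt Dmax m d * (gfrac m x d P * pP p + gU m x d * pU p))
      \<le> (\<Sum>d\<in>Dset Dmax. wgt Dmax m d * pU p)"
    using w0 t1 by (intro sum_mono mult_left_mono) auto
  also have "\<dots> = pU p" using sw by (simp add: sum_distrib_right[symmetric])
  finally have gam1: "gam p Dmax m x \<le> beta p * pU p"
    unfolding gam_def using vp by simp
  define r where "r = beta p * pU p / davg Dmax m * (\<Sum>d\<in>Dset Dmax. real d * (real d - 1) * m d)"
  have lam0: "0 \<le> lam p Dmax m x"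
    unfolding lam_def using vp w0 t0 d1 by (intro mult_nonneg_nonneg sum_nonneg) auto
  have "(\<Sum>d\<in>Dset Dmax. wgt Dmax m d * (real d - 1) * (gfrac m x d P * pP p + gU m x d * pU p))
      \<le> (\<Sum>d\<in>Dset Dmax. wgt Dmax m d * (real d - 1) * pU p)"
    using w0 t1 d1 by (intro sum_mono mult_left_mono) auto
  also have "\<dots> = pU p / S * (\<Sum>d\<in>Dset Dmax. real d * (real d - 1) * m d)"
    by (simp add: wgt_def S_def[symmetric] sum_distrib_left sum_divide_distrib[symmetric] algebra_simps diff_divide_distrib)
  finally have L: "(\<Sum>d\<in>Dset Dmax. wgt Dmax m d * (real d - 1) * (gfrac m x d P * pP p + gU m x d * pU p))
      \<le> pU p / S * (\<Sum>d\<in>Dset Dmax. real d * (real d - 1) * m d)" .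
  have lam1: "lam p Dmax m x \<le> r"
    unfolding lam_def r_def using mult_left_mono[OF L, of "beta p"] vp by (simp add: davg_def S_def)
  have reidx: "(\<Sum>k\<in>{1..Kh p}. lam p Dmax m x ^ (k - 1)) = (\<Sum>k<Kh p. lam p Dmax m x ^ k)"
  proof -
    have "{1..Kh p} = Suc ` {..<Kh p}" by (auto simp: image_iff) (metis Suc_pred lessThan_iff le_simps(3) less_eq_Suc_le not_less_eq_eq diff_less zero_less_one less_le_trans)
    thus ?thesis by (simp add: sum.reindex)
  qed
  have s0: "0 \<le> (\<Sum>k<Kh p. lam p Dmax m x ^ k)" using lam0 by (simp add: sum_nonneg)
  have s1: "(\<Sum>k<Kh p. lam p Dmax m x ^ k) \<le> (\<Sum>k<Kh p. r ^ k)"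
    using lam0 lam1 by (intro sum_mono power_mono) auto
  have "ext p Dmax m x = gam p Dmax m x * (\<Sum>k<Kh p. lam p Dmax m x ^ k)"
    unfolding ext_def reidx ..
  moreover have "gam p Dmax m x * (\<Sum>k<Kh p. lam p Dmax m x ^ k) \<le> beta p * pU p * (\<Sum>k<Kh p. r ^ k)"
    using gam0 gam1 s0 s1 by (intro mult_mono) auto
  ultimately show ?thesis using gam0 s0 by (simp add: emax_def r_def)
qed

lemma Min_act: "(MIN a\<in>(UNIV::act set). f a) \<le> f N"
proof -
  have "finite (range f)" unfolding UNIV_act by simp
  thus ?thesis by (rule Min_le) simp
qed

lemma nashD: "nash_eq p Dmax m x \<Longrightarrow> d \<in> Dset Dmax \<Longrightarrow> x d a > 0 \<Longrightarrow>
   cost p Dmax m x d a = (MIN a'\<in>(UNIV::act set). cost p Dmax m x d a')"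
  unfolding nash_eq_def by blast

theorem theorem7:
  fixes p :: params and Dmax :: nat and m :: "nat \<Rightarrow> real"
    and xs :: "nat \<Rightarrow> act \<Rightarrow> real" and ys :: "nat \<Rightarrow> real"
  assumes "Dmax \<ge> 1"
    and "pop_vector Dmax m"
    and "valid_params p"
    and "assumption_A p"
    and "cP p \<ge> (LU p - LP p) * tau p"
    and "nash_eq p Dmax m xs"
    and "ys \<in> Yset Dmax m"
    and "\<forall>y\<in>Yset Dmax m. SCbar p Dmax m ys \<le> SCbar p Dmax m y"
  shows "SC p Dmax m xs / SCbar p Dmax m ys \<le> 1 + davg Dmax m * emax p Dmax m"
proof -
  have mpos: "\<forall>d\<in>Dset Dmax. m d > 0" and msum: "(\<Sum>d\<in>Dset Dmax. m d) = 1"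
    using assms(2) by (auto simp: pop_vector_def)
  have vp: "0 < tau p" "0 \<le> LP p" "LP p < LU p"
    using assms(3) by (auto simp: valid_params_def)
  have d1: "\<forall>d\<in>Dset Dmax. d \<ge> 1" by (simp add: Dset_def)
  have ss: "social_state Dmax m xs" using assms(6) by (simp add: nash_eq_def)
  have gx: "\<forall>d\<in>Dset Dmax. gfrac m xs d P \<ge> 0 \<and> gU m xs d \<ge> 0 \<and> gfrac m xs d P + gU m xs d = 1"
  proof
    fix d assume d: "d \<in> Dset Dmax"
    have "(\<forall>a. xs d a \<ge> 0) \<and> xs d I + xs d N + xs d P = m d" using ss d by (simp add: social_state_def)
    thus "gfrac m xs d P \<ge> 0 \<and> gU m xs d \<ge> 0 \<and> gfrac m xs d P + gU m xs d = 1"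
      using mpos d by (auto simp: gfrac_def gU_def field_simps)
  qed
  have gy: "\<forall>d\<in>Dset Dmax. gfrac m (Xof m ys) d P \<ge> 0 \<and> gU m (Xof m ys) d \<ge> 0 \<and> gfrac m (Xof m ys) d P + gU m (Xof m ys) d = 1"
  proof
    fix d assume d: "d \<in> Dset Dmax"
    have "0 \<le> ys d" "ys d \<le> m d" using assms(7) d by (auto simp: Yset_def)
    thus "gfrac m (Xof m ys) d P \<ge> 0 \<and> gU m (Xof m ys) d \<ge> 0 \<and> gfrac m (Xof m ys) d P + gU m (Xof m ys) d = 1"
      using mpos d by (auto simp: gfrac_def gU_def Xof_def field_simps)
  qed
  note ex = ext_bounds[OF assms(1-3) gx]
  note ey = ext_bounds[OF assms(1-3) gy]
  define e where "e = ext p Dmax m xs"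
  define ey' where "ey' = ext p Dmax m (Xof m ys)"
  define R where "R = 1 + davg Dmax m * emax p Dmax m"
  have dav: "davg Dmax m > 0" by (rule davg_pos[OF assms(1,2)])
  have Rge: "R \<ge> 1 + davg Dmax m * e" unfolding R_def e_def using ex dav by simp
  have up: "SC p Dmax m xs \<le> (\<Sum>d\<in>Dset Dmax. m d * cost p Dmax m xs d N)"
    unfolding SC_def
  proof (rule sum_mono)
    fix d assume d: "d \<in> Dset Dmax"
    have st: "(\<forall>a. xs d a \<ge> 0) \<and> xs d I + xs d N + xs d P = m d" using ss d by (simp add: social_state_def)
    have "xs d P * cost p Dmax m xs d P \<le> xs d P * cost p Dmax m xs d N"
    proof (cases "xs d P > 0")
      case True
      have "cost p Dmax m xs d P \<le> cost p Dmax m xs d N"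
        by (rule ord_eq_le_trans[OF nashD[OF assms(6) d True] Min_act])
      then show ?thesis using True by (simp add: mult_left_mono)
    next
      case False
      hence "xs d P = 0" using st by (metis not_less order.antisym)
      thus ?thesis by simp
    qed
    thus "xs d P * cost p Dmax m xs d P + (m d - xs d P) * cost p Dmax m xs d N
        \<le> m d * cost p Dmax m xs d N" by (simp add: algebra_simps)
  qed
  also have "\<dots> = tau p * LU p * ((\<Sum>d\<in>Dset Dmax. m d) + e * davg Dmax m)"
    by (simp add: costN e_def davg_def sum_distrib_left sum.distrib algebra_simps)
  also have "\<dots> = tau p * LU p * (1 + davg Dmax m * e)" using msum by simp
  also have "\<dots> \<le> tau p * LU p * R" using Rge vp by (intro mult_left_mono) auto
  finally have up2: "SC p Dmax m xs \<le> tau p * LU p * R" .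
  have "tau p * LU p = (\<Sum>d\<in>Dset Dmax. ys d * (tau p * LU p) + (m d - ys d) * (tau p * LU p))"
    using msum by (simp add: algebra_simps sum_distrib_left[symmetric])
  also have "\<dots> \<le> SCbar p Dmax m ys"
    unfolding SCbar_def SC_def
  proof (rule sum_mono)
    fix d assume d: "d \<in> Dset Dmax"
    have y: "0 \<le> ys d" "ys d \<le> m d" using assms(7) d by (auto simp: Yset_def)
    have de: "0 \<le> real d * ey'" using ey by (simp add: ey'_def)
    have cP: "tau p * LU p \<le> cost p Dmax m (Xof m ys) d P"
    proof -
      have "tau p * LP p \<le> tau p * (1 + real d * ey') * LP p"
      proof -
        have "0 \<le> tau p * (real d * ey') * LP p" using de vp by simp
        thus ?thesis by (simp add: algebra_simps)
      qed
      thus ?thesis using assms(5) by (simp add: costP ey'_def[symmetric] algebra_simps)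
    qed
    have cN: "tau p * LU p \<le> cost p Dmax m (Xof m ys) d N"
    proof -
      have "0 \<le> tau p * (real d * ey') * LU p" using de vp by simp
      thus ?thesis by (simp add: costN ey'_def[symmetric] algebra_simps)
    qed
    show "ys d * (tau p * LU p) + (m d - ys d) * (tau p * LU p)
        \<le> Xof m ys d P * cost p Dmax m (Xof m ys) d P + (m d - Xof m ys d P) * cost p Dmax m (Xof m ys) d N"
      using y cP cN by (simp add: Xof_def add_mono mult_left_mono)
  qed
  finally have lo: "tau p * LU p \<le> SCbar p Dmax m ys" .
  have tl: "tau p * LU p > 0" using vp by simp
  have R0: "R \<ge> 0" using Rge ex dav e_def by (smt (verit) mult_nonneg_nonneg)
  have b: "SCbar p Dmax m ys > 0" using lo tl by simp
  have "SC p Dmax m xs / SCbar p Dmax m ys \<le> tau p * LU p * R / SCbar p Dmax m ys"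
    using up2 b by (simp add: divide_right_mono)
  also have "\<dots> \<le> R" using lo b R0 by (simp add: divide_le_eq mult_left_mono mult.commute)
  finally show ?thesis by (simp add: R_def)
qed

end
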